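(* For every $f_0>1$, $$\beta(f_0)\le\frac{\pi}{2^{1/2}}+(f_0-1)^{1/2},\qquad\text{where }\ \beta(f_0)=\frac12\int_{\phi_*(f_0)}^{\phi^*(f_0)}\frac{d\phi}{\sqrt{f_0-f(\phi)}}.$$
   Context: Let $f(\phi)=e^\phi-\phi$. For $f_1\ge1$, $\phi_*(f_1)\le0\le\phi^*(f_1)$ denote the two solutions $\phi$ of $f(\phi)=f_1$. *)

theory Defs
  imports "HOL-Analysis.Analysis"
begin

definition ff :: "real \<Rightarrow> real" where
  "ff \<phi> = exp \<phi> - \<phi>"

definition phi_lo :: "real \<Rightarrow> real" where
  "phi_lo f1 = (THE \<phi>. \<phi> \<le> 0 \<and> ff \<phi> = f1)"

definition phi_hi :: "real \<Rightarrow> real" where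
  "phi_hi f1 = (THE \<phi>. 0 \<le> \<phi> \<and> ff \<phi> = f1)"

text \<open>beta(f0) = 1/2 * integral over (phi_lo f0, phi_hi f0) of 1/sqrt(f0 - ff phi),
  as a (possibly improper) nonnegative Lebesgue integral, valued in ennreal.\<close>
definition beta :: "real \<Rightarrow> ennreal" where
  "beta f0 = ennreal (1/2) *
     (\<integral>\<^sup>+ \<phi> \<in> {phi_lo f0 <..< phi_hi f0}. ennreal (1 / sqrt (f0 - ff \<phi>)) \<partial>lborel)"

end

theory Submission imports Defs begin

definition gg :: "real \<Rightarrow> real" where "gg x = exp x - 1 - x"

lemma exp_strict: assumes "t \<noteq> 0" shows "exp (t::real) > 1 + t"
proof -
  have e: "exp t = exp (t/2) * exp (t/2)" by (simp flip: exp_add)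
  have h: "exp (t/2) \<ge> 1 + t/2" by simp
  show ?thesis
  proof (cases "1 + t/2 \<ge> 0")
    case True
    then have "exp (t/2) * exp (t/2) \<ge> (1+t/2)*(1+t/2)" using h by (simp add: mult_mono)
    moreover have "(1+t/2)*(1+t/2) = 1 + t + t*t/4" by (simp add: algebra_simps)
    moreover have "t*t > 0" using assms by (metis linorder_neqE_linordered_idom mult_neg_neg mult_pos_pos)
    ultimately show ?thesis using e by linarith
  next
    case False then show ?thesis using exp_gt_zero[of t] by linarith
  qed
qed

lemma gg_mono_pos: assumes "0 \<le> x" "x < y" shows "gg x < gg y"
proof -
  have "exp (y - x) > 1 + (y - x)" using assms exp_strict by simp
  moreover have "exp x \<ge> 1" using assms by simp
  moreover have "exp y = exp x * exp (y - x)" by (simp flip: exp_add)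
  moreover have "exp (y - x) - 1 \<ge> 0" using assms by simp
  ultimately have "1 * (exp (y - x) - 1) \<le> exp x * (exp (y - x) - 1)"
    by (intro mult_right_mono) auto
  then have "exp y - exp x \<ge> exp (y - x) - 1"
    using \<open>exp y = exp x * exp (y - x)\<close> by (simp add: algebra_simps)
  then show ?thesis unfolding gg_def using \<open>exp (y - x) > 1 + (y - x)\<close> by simp
qed

lemma gg_mono_neg: assumes "x < y" "y \<le> 0" shows "gg y < gg x"
proof -
  have s: "exp (x - y) > 1 + (x - y)" using assms exp_strict by simp
  have "exp y \<le> 1" using assms by simp
  moreover have "exp (x - y) < 1" using assms by simp
  moreover have "exp x = exp y * exp (x - y)" by (simp flip: exp_add)
  moreover have "1 - exp (x - y) \<ge> 0" using assms by simp
  ultimately have "exp y * (1 - exp (x - y)) \<le> 1 * (1 - exp (x - y))"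
    by (intro mult_right_mono) auto
  then have "exp y - exp x \<le> 1 - exp (x - y)"
    using \<open>exp x = exp y * exp (x - y)\<close> by (simp add: algebra_simps)
  then show ?thesis unfolding gg_def using s by simp
qed

lemma gg_nonneg: "gg x \<ge> 0" unfolding gg_def using exp_ge_add_one_self[of x] by linarith
lemma gg_pos: "x \<noteq> 0 \<Longrightarrow> gg x > 0" unfolding gg_def using exp_strict[of x] by simp

lemma P1: assumes "0 \<le> x" shows "2 * gg x \<le> (exp x - 1)^2"
proof -
  let ?k = "\<lambda>x. (exp x - 1)^2 - 2 * gg x"
  have d: "\<And>x. DERIV ?k x :> 2 * (exp x - 1)^2"
  proof -
    fix x
    have "DERIV ?k x :> 2 * (exp x - 1) * exp x - 2 * (exp x - 0 - 1)"
      unfolding gg_def by (intro derivative_eq_intros refl) auto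
    moreover have "2 * (exp x - 1) * exp x - 2 * (exp x - 0 - 1) = 2 * (exp x - 1)^2"
      by (simp add: power2_eq_square algebra_simps)
    ultimately show "DERIV ?k x :> 2 * (exp x - 1)^2" by simp
  qed
  have "?k 0 \<le> ?k x"
    by (rule DERIV_nonneg_imp_nondecreasing[OF assms]) (use d in \<open>auto intro!: exI\<close>)
  then show ?thesis by (simp add: gg_def)
qed

lemma P2: assumes "x \<le> 0" shows "2 * gg x * (exp x)^2 \<le> (1 - exp x)^2"
proof -
  let ?m = "\<lambda>x. (1 - exp x)^2 - 2 * gg x * (exp x)^2"
  have d: "\<And>x. DERIV ?m x :> - 2 * exp x * (1 - exp x)^2 - 4 * gg x * (exp x)^2"
  proof -
    fix x
    have "DERIV ?m x :> 2 * (1 - exp x) * (0 - exp x) - (2 * (exp x - 0 - 1) * (exp x)^2 + 2 * gg x * (2 * exp x * exp x))"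
      unfolding gg_def by (intro derivative_eq_intros refl) (auto simp: gg_def)
    moreover have "2 * (1 - exp x) * (0 - exp x) - (2 * (exp x - 0 - 1) * (exp x)^2 + 2 * gg x * (2 * exp x * exp x)) = - 2 * exp x * (1 - exp x)^2 - 4 * gg x * (exp x)^2"
      by (simp add: power2_eq_square algebra_simps)
    ultimately show "DERIV ?m x :> - 2 * exp x * (1 - exp x)^2 - 4 * gg x * (exp x)^2" by simp
  qed
  have "?m 0 \<le> ?m x"
    apply (rule DERIV_nonpos_imp_nonincreasing[OF assms])
  proof -
    fix y assume "x \<le> y" "y \<le> 0"
    have "0 \<le> 2 * exp y * (1 - exp y)^2" by simp
    moreover have "0 \<le> 4 * gg y * (exp y)^2" using gg_nonneg by simp
    ultimately have "- 2 * exp y * (1 - exp y)^2 - 4 * gg y * (exp y)^2 \<le> 0" by linarith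
    then show "\<exists>z. DERIV ?m y :> z \<and> z \<le> 0" using d by (intro exI[of _ "- 2 * exp y * (1 - exp y)^2 - 4 * gg y * (exp y)^2"]) auto
  qed
  then show ?thesis by (simp add: gg_def)
qed


lemma cont_gg: "continuous_on S gg" unfolding gg_def by (intro continuous_intros)
lemma ff_gg: "ff x = gg x + 1" unfolding ff_def gg_def by simp

lemma gg_quad: assumes "0 \<le> x" shows "gg x \<ge> x * x / 4"
proof -
  have e: "exp x = exp (x/2) * exp (x/2)" by (simp flip: exp_add)
  have h: "exp (x/2) \<ge> 1 + x/2" by simp
  have "exp (x/2) * exp (x/2) \<ge> (1+x/2)*(1+x/2)" using h assms by (simp add: mult_mono)
  moreover have "(1+x/2)*(1+x/2) = 1 + x + x*x/4" by (simp add: algebra_simps)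
  ultimately show ?thesis using e unfolding gg_def by linarith
qed

lemma exists_hi: assumes "c > 0" shows "\<exists>b>0. gg b = c"
proof -
  have "gg (2*c+2) \<ge> (2*c+2)*(2*c+2)/4" using gg_quad assms by simp
  moreover have "(2*c+2)*(2*c+2)/4 \<ge> c" using assms by (simp add: algebra_simps power2_eq_square)
  ultimately have "gg 0 \<le> c" "c \<le> gg (2*c+2)" using assms by (auto simp: gg_def)
  from IVT'[OF this _ cont_gg] assms obtain x where "0 \<le> x" "gg x = c" by auto
  moreover have "x \<noteq> 0" using calculation assms by (auto simp: gg_def)
  ultimately show ?thesis by (intro exI[of _ x]) auto
qed

lemma exists_lo: assumes "c > 0" shows "\<exists>a<0. gg a = c"
proof -
  have "gg (-c-1) \<ge> c" unfolding gg_def using exp_gt_zero[of "-c-1"] by linarith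
  moreover have "gg 0 \<le> c" using assms by (simp add: gg_def)
  ultimately have "\<exists>x. -c-1 \<le> x \<and> x \<le> 0 \<and> gg x = c"
    using assms by (intro IVT2' cont_gg) auto
  then obtain x where "x \<le> 0" "gg x = c" by auto
  moreover have "x \<noteq> 0" using calculation assms by (auto simp: gg_def)
  ultimately show ?thesis by (intro exI[of _ x]) auto
qed

lemma phi_hi_eq: assumes "b > 0" "gg b = f0 - 1" shows "phi_hi f0 = b"
  unfolding phi_hi_def
proof (rule the_equality)
  show "0 \<le> b \<and> ff b = f0" using assms by (simp add: ff_gg)
  fix x assume "0 \<le> x \<and> ff x = f0"
  then have "0 \<le> x" "gg x = gg b" using assms by (auto simp: ff_gg)
  then show "x = b" using gg_mono_pos assms
    by (metis less_eq_real_def linorder_neqE_linordered_idom order_less_irrefl)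
qed

lemma phi_lo_eq: assumes "a < 0" "gg a = f0 - 1" shows "phi_lo f0 = a"
  unfolding phi_lo_def
proof (rule the_equality)
  show "a \<le> 0 \<and> ff a = f0" using assms by (simp add: ff_gg)
  fix x assume "x \<le> 0 \<and> ff x = f0"
  then have "x \<le> 0" "gg x = gg a" using assms by (auto simp: ff_gg)
  then show "x = a" using gg_mono_neg assms
    by (metis less_eq_real_def linorder_neqE_linordered_idom order_less_irrefl)
qed

lemma DERIV_gg: "DERIV gg x :> exp x - 1"
proof -
  have "DERIV gg x :> exp x - 0 - 1" unfolding gg_def by (auto intro!: derivative_eq_intros)
  then show ?thesis by simp
qed

lemma DERIV_A: assumes c: "c > 0" and g: "0 < gg x" "gg x < c"
  shows "DERIV (\<lambda>x. arcsin (sqrt (gg x / c))) x :> (exp x - 1) / (2 * sqrt (gg x) * sqrt (c - gg x))"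
proof -
  let ?u = "gg x / c"
  have u: "0 < ?u" "?u < 1" using c g by auto
  have du: "DERIV (\<lambda>x. gg x / c) x :> (exp x - 1) / c"
    using DERIV_cdivide[OF DERIV_gg[of x]] by simp
  have ds: "DERIV (\<lambda>x. sqrt (gg x / c)) x :> inverse (sqrt ?u) / 2 * ((exp x - 1) / c)"
    by (rule DERIV_chain2[OF DERIV_real_sqrt[OF u(1)] du])
  have s1: "sqrt ?u < 1" using u by simp
  have s0: "- 1 < sqrt ?u" using u by (smt (verit) real_sqrt_ge_zero)
  have da: "DERIV (\<lambda>x. arcsin (sqrt (gg x / c))) x :>
     inverse (sqrt (1 - (sqrt ?u)\<^sup>2)) * (inverse (sqrt ?u) / 2 * ((exp x - 1) / c))"
    by (rule DERIV_chain2[OF DERIV_arcsin[OF s0 s1] ds])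
  have "(sqrt ?u)\<^sup>2 = ?u" using u by simp
  moreover have "1 - ?u = (c - gg x) / c" using c by (simp add: field_simps)
  ultimately have e1: "sqrt (1 - (sqrt ?u)\<^sup>2) = sqrt (c - gg x) / sqrt c" by (simp add: real_sqrt_divide)
  have e2: "sqrt ?u = sqrt (gg x) / sqrt c" by (simp add: real_sqrt_divide)
  have e1': "inverse (sqrt (1 - (sqrt ?u)\<^sup>2)) = sqrt c / sqrt (c - gg x)" using e1 by simp
  have e2': "inverse (sqrt ?u) = sqrt c / sqrt (gg x)" using e2 by simp
  have sc: "sqrt c * sqrt c = c" using c by simp
  have p: "sqrt (c - gg x) > 0" "sqrt (gg x) > 0" "sqrt c > 0" using c g by auto
  have "inverse (sqrt (1 - (sqrt ?u)\<^sup>2)) * (inverse (sqrt ?u) / 2 * ((exp x - 1) / c))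
      = (sqrt c * sqrt c) * (exp x - 1) / (2 * sqrt (gg x) * sqrt (c - gg x) * c)"
    unfolding e1' e2' using p c by (simp add: field_simps)
  also have "\<dots> = (exp x - 1) / (2 * sqrt (gg x) * sqrt (c - gg x))" using sc c by simp
  finally show ?thesis using da by simp
qed

lemma DERIV_B: assumes g: "gg x < c"
  shows "DERIV (\<lambda>x. sqrt (c - gg x)) x :> - (exp x - 1) / (2 * sqrt (c - gg x))"
proof -
  have "DERIV (\<lambda>x. sqrt (c - gg x)) x :> inverse (sqrt (c - gg x)) / 2 * (0 - (exp x - 1))"
    using g by (intro DERIV_chain2[OF DERIV_real_sqrt] derivative_intros DERIV_gg) auto
  then show ?thesis by (simp add: field_simps)
qed


lemma nn_FTC:
  fixes F f :: "real \<Rightarrow> real" and a b :: real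
  assumes ab: "a < b"
  and F: "\<And>x. a < x \<Longrightarrow> x < b \<Longrightarrow> DERIV F x :> f x"
  and f: "\<And>x. a < x \<Longrightarrow> x < b \<Longrightarrow> isCont f x"
  and nn: "\<And>x. a < x \<Longrightarrow> x < b \<Longrightarrow> 0 \<le> f x"
  and cF: "continuous_on {a..b} F"
  shows "(\<integral>\<^sup>+ x \<in> {a<..<b}. ennreal (f x) \<partial>lborel) = ennreal (F b - F a)"
proof -
  have A: "((F \<circ> real_of_ereal) \<longlongrightarrow> F a) (at_right (ereal a))"
  proof -
    have "(F \<longlongrightarrow> F a) (at_right a)"
      using cF ab by (metis atLeastAtMost_iff continuous_on_Icc_at_rightD)
    then show ?thesis unfolding at_right_ereal filterlim_filtermap o_def by simp
  qed
  have B: "((F \<circ> real_of_ereal) \<longlongrightarrow> F b) (at_left (ereal b))"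
  proof -
    have "(F \<longlongrightarrow> F b) (at_left b)"
      using cF ab by (metis atLeastAtMost_iff continuous_on_Icc_at_leftD)
    then show ?thesis unfolding at_left_ereal filterlim_filtermap o_def by simp
  qed
  have ab': "ereal a < ereal b" using ab by simp
  note R = interval_integral_FTC_nonneg[OF ab', of F f, OF _ _ _ A B]
  have si: "set_integrable lborel {a<..<b} f" and iv: "(LBINT x=ereal a..ereal b. f x) = F b - F a"
    using R F f nn by (auto intro!: AE_I2)
  have iv2: "(LBINT x:{a<..<b}. f x) = F b - F a"
    using iv ab by (simp add: interval_lebesgue_integral_def)
  have "(\<integral>\<^sup>+ x \<in> {a<..<b}. ennreal (f x) \<partial>lborel) = (\<integral>\<^sup>+ x. ennreal (indicator {a<..<b} x *\<^sub>R f x) \<partial>lborel)"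
    by (intro nn_integral_cong) (auto simp: indicator_def)
  also have "\<dots> = ennreal (LBINT x:{a<..<b}. f x)"
    unfolding set_lebesgue_integral_def
    using si nn unfolding set_integrable_def
    by (intro nn_integral_eq_integral) (auto intro!: AE_I2 simp: indicator_def)
  finally show ?thesis using iv2 by simp
qed


lemma isCont_gg[continuous_intros]: "isCont gg x"
  unfolding gg_def by (intro continuous_intros)
lemma cont_on_gg[continuous_intros]: "continuous_on S gg" by (rule cont_gg)
lemma meas_gg[measurable]: "gg \<in> borel_measurable borel"
  by (intro borel_measurable_continuous_onI cont_gg)

lemma ineq1: assumes "0 < x" "0 < gg x" "gg x < c"
  shows "1 / sqrt (c - gg x) \<le> sqrt 2 * ((exp x - 1) / (2 * sqrt (gg x) * sqrt (c - gg x)))"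
proof -
  have e1: "exp x - 1 > 0" using assms by simp
  have "sqrt 2 * sqrt (gg x) = sqrt (2 * gg x)" by (simp add: real_sqrt_mult)
  also have "\<dots> \<le> sqrt ((exp x - 1)^2)" by (rule real_sqrt_le_mono) (use P1[of x] assms in simp)
  also have "\<dots> = exp x - 1" using e1 by simp
  finally have h: "sqrt 2 * sqrt (gg x) \<le> exp x - 1" .
  have p: "sqrt (gg x) > 0" "sqrt (c - gg x) > 0" using assms by auto
  have "1 / sqrt (c - gg x) = sqrt 2 * (sqrt 2 * sqrt (gg x)) / (2 * sqrt (gg x) * sqrt (c - gg x))"
    using p by (simp add: field_simps)
  also have "\<dots> \<le> sqrt 2 * (exp x - 1) / (2 * sqrt (gg x) * sqrt (c - gg x))"
    using p h by (intro divide_right_mono mult_left_mono) auto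
  finally show ?thesis by simp
qed

lemma ineq2: assumes "x < 0" "0 < gg x" "gg x < c"
  shows "1 / sqrt (c - gg x) \<le> - sqrt 2 * ((exp x - 1) / (2 * sqrt (gg x) * sqrt (c - gg x)))
           + 2 * (- (exp x - 1) / (2 * sqrt (c - gg x)))"
proof -
  have e1: "1 - exp x > 0" using assms by simp
  have "sqrt 2 * sqrt (gg x) * exp x = sqrt (2 * gg x * (exp x)^2)" by (simp add: real_sqrt_mult)
  also have "\<dots> \<le> sqrt ((1 - exp x)^2)" by (rule real_sqrt_le_mono) (use P2[of x] assms in simp)
  also have "\<dots> = 1 - exp x" using e1 by simp
  finally have h: "sqrt 2 * sqrt (gg x) * exp x \<le> 1 - exp x" .
  have p: "sqrt (gg x) > 0" "sqrt (c - gg x) > 0" using assms by auto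
  have "exp x / sqrt (c - gg x) = sqrt 2 * (sqrt 2 * sqrt (gg x) * exp x) / (2 * sqrt (gg x) * sqrt (c - gg x))"
    using p by (simp add: field_simps)
  also have "\<dots> \<le> sqrt 2 * (1 - exp x) / (2 * sqrt (gg x) * sqrt (c - gg x))"
    using p h by (intro divide_right_mono mult_left_mono) auto
  finally have L: "exp x / sqrt (c - gg x) \<le> sqrt 2 * (1 - exp x) / (2 * sqrt (gg x) * sqrt (c - gg x))" .
  have E1: "1 / sqrt (c - gg x) = exp x / sqrt (c - gg x) + (1 - exp x) / sqrt (c - gg x)"
    unfolding add_divide_distrib[symmetric] by simp
  have E2: "- sqrt 2 * ((exp x - 1) / (2 * sqrt (gg x) * sqrt (c - gg x)))
           + 2 * (- (exp x - 1) / (2 * sqrt (c - gg x))) =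
        sqrt 2 * (1 - exp x) / (2 * sqrt (gg x) * sqrt (c - gg x)) + (1 - exp x) / sqrt (c - gg x)"
    using p by (simp add: field_simps)
  show ?thesis by (simp only: E1 E2) (rule add_right_mono[OF L])
qed

theorem corollary2p5:
  fixes f0 :: real
  assumes "f0 > 1"
  shows "beta f0 \<le> ennreal (pi / sqrt 2 + sqrt (f0 - 1))"
proof -
  define c where "c = f0 - 1"
  have c: "c > 0" using assms c_def by simp
  obtain b where b: "b > 0" "gg b = c" using exists_hi[OF c] by auto
  obtain a where a: "a < 0" "gg a = c" using exists_lo[OF c] by auto
  have hi: "phi_hi f0 = b" using phi_hi_eq b c_def by simp
  have lo: "phi_lo f0 = a" using phi_lo_eq a c_def by simp
  have rpos: "0 < gg x \<and> gg x < c" if "0 < x" "x < b" for x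
    using gg_mono_pos[of 0 x] gg_mono_pos[of x b] that b by (simp add: gg_def)
  have rneg: "0 < gg x \<and> gg x < c" if "a < x" "x < 0" for x
    using gg_mono_neg[of x 0] gg_mono_neg[of a x] that a by (simp add: gg_def)
  have g0: "gg 0 = 0" by (simp add: gg_def)
  have rpos': "0 \<le> gg x \<and> gg x \<le> c" if "0 \<le> x" "x \<le> b" for x
    using rpos[of x] that b gg_nonneg[of x] g0 c by (cases "x = 0 \<or> x = b") auto
  have rneg': "0 \<le> gg x \<and> gg x \<le> c" if "a \<le> x" "x \<le> 0" for x
    using rneg[of x] that a gg_nonneg[of x] g0 c by (cases "x = 0 \<or> x = a") auto
  have sq: "\<And>y. 0 \<le> y \<Longrightarrow> -1 \<le> sqrt y" by (metis neg_le_0_iff_le real_sqrt_ge_zero order_trans zero_le_one)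
  define D1 where "D1 x = sqrt 2 * ((exp x - 1) / (2 * sqrt (gg x) * sqrt (c - gg x)))" for x
  define D2 where "D2 x = - sqrt 2 * ((exp x - 1) / (2 * sqrt (gg x) * sqrt (c - gg x)))
           + 2 * (- (exp x - 1) / (2 * sqrt (c - gg x)))" for x
  define F1 where "F1 x = sqrt 2 * arcsin (sqrt (gg x / c))" for x
  define F2 where "F2 x = - sqrt 2 * arcsin (sqrt (gg x / c)) + 2 * sqrt (c - gg x)" for x
  have I1: "(\<integral>\<^sup>+ x \<in> {0<..<b}. ennreal (D1 x) \<partial>lborel) = ennreal (F1 b - F1 0)"
  proof (rule nn_FTC[OF b(1)])
    fix x assume x: "0 < x" "x < b"
    note r = rpos[OF x]
    show "DERIV F1 x :> D1 x" unfolding F1_def D1_def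
      using r c by (intro DERIV_cmult DERIV_A) auto
    show "isCont D1 x" unfolding D1_def using r by (intro continuous_intros) auto
    show "0 \<le> D1 x" using ineq1[of x c] x r
      by (smt (verit) D1_def divide_nonneg_nonneg real_sqrt_ge_zero)
  next
    show "continuous_on {0..b} F1" unfolding F1_def
      using rpos' c by (intro continuous_intros) (auto simp: divide_le_eq_1 intro!: sq)
  qed
  have I2: "(\<integral>\<^sup>+ x \<in> {a<..<0}. ennreal (D2 x) \<partial>lborel) = ennreal (F2 0 - F2 a)"
  proof (rule nn_FTC[OF a(1)])
    fix x assume x: "a < x" "x < 0"
    note r = rneg[OF x]
    show "DERIV F2 x :> D2 x" unfolding F2_def D2_def
      using r c by (intro DERIV_add DERIV_cmult DERIV_A DERIV_B) auto
    show "isCont D2 x" unfolding D2_def using r by (intro continuous_intros) auto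
    show "0 \<le> D2 x" using ineq2[of x c] x r
      by (smt (verit) D2_def divide_nonneg_nonneg real_sqrt_ge_zero)
  next
    show "continuous_on {a..0} F2" unfolding F2_def
      using rneg' c by (intro continuous_intros) (auto simp: divide_le_eq_1 intro!: sq)
  qed
  have V1: "F1 b - F1 0 = sqrt 2 * (pi / 2)" unfolding F1_def using b c by (simp add: gg_def)
  have V2: "F2 0 - F2 a = 2 * sqrt c + sqrt 2 * (pi / 2)" unfolding F2_def using a c by (simp add: gg_def)
  let ?h = "\<lambda>x. ennreal (1 / sqrt (f0 - ff x))"
  have hf: "f0 - ff x = c - gg x" for x by (simp add: c_def ff_gg)
  have "(\<integral>\<^sup>+ x \<in> {a<..<b}. ?h x \<partial>lborel) \<le>
      (\<integral>\<^sup>+ x. ennreal (D2 x) * indicator {a<..<0} x + ennreal (D1 x) * indicator {0<..<b} x \<partial>lborel)"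
  proof (rule nn_integral_mono_AE)
    show "AE x in lborel. ?h x * indicator {a<..<b} x \<le>
       ennreal (D2 x) * indicator {a<..<0} x + ennreal (D1 x) * indicator {0<..<b} x"
      using AE_lborel_singleton[of 0]
    proof (rule AE_mp, intro AE_I2 impI)
      fix x :: real assume "x \<noteq> 0"
      show "?h x * indicator {a<..<b} x \<le>
       ennreal (D2 x) * indicator {a<..<0} x + ennreal (D1 x) * indicator {0<..<b} x"
      proof (cases "a < x \<and> x < b")
        case False then show ?thesis by (auto simp: indicator_def)
      next
        case True
        show ?thesis
        proof (cases "x < 0")
          case xn: True
          then have "1 / sqrt (f0 - ff x) \<le> D2 x" unfolding hf D2_def
            using ineq2[of x c] rneg[of x] True by auto
          then show ?thesis using True xn by (auto simp: indicator_def intro!: ennreal_leI)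
        next
          case xp: False
          then have xp: "0 < x" using \<open>x \<noteq> 0\<close> by simp
          then have "1 / sqrt (f0 - ff x) \<le> D1 x" unfolding hf D1_def
            using ineq1[of x c] rpos[of x] True by auto
          then show ?thesis using True xp by (auto simp: indicator_def intro!: ennreal_leI)
        qed
      qed
    qed
  qed
  also have "\<dots> = (\<integral>\<^sup>+ x \<in> {a<..<0}. ennreal (D2 x) \<partial>lborel) + (\<integral>\<^sup>+ x \<in> {0<..<b}. ennreal (D1 x) \<partial>lborel)"
    by (rule nn_integral_add) (auto simp: D1_def D2_def)
  also have "\<dots> = ennreal (2 * sqrt c + sqrt 2 * (pi / 2)) + ennreal (sqrt 2 * (pi / 2))"
    using I1 I2 V1 V2 by simp
  also have "\<dots> = ennreal (2 * (pi / sqrt 2 + sqrt c))"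
  proof -
    have "sqrt 2 * (pi / 2) = pi / sqrt 2"
      by (simp add: field_simps)
    then have "ennreal (2 * sqrt c + sqrt 2 * (pi / 2)) + ennreal (sqrt 2 * (pi / 2))
       = ennreal (2 * sqrt c + pi / sqrt 2) + ennreal (pi / sqrt 2)" by simp
    also have "\<dots> = ennreal (2 * sqrt c + pi / sqrt 2 + pi / sqrt 2)"
      by (rule ennreal_plus[symmetric]) (use c in auto)
    finally show ?thesis by (simp add: algebra_simps)
  qed
  finally have "(\<integral>\<^sup>+ x \<in> {a<..<b}. ?h x \<partial>lborel) \<le> ennreal (2 * (pi / sqrt 2 + sqrt c))" .
  then have "beta f0 \<le> ennreal (1/2) * ennreal (2 * (pi / sqrt 2 + sqrt c))"
    unfolding beta_def hi lo by (rule mult_left_mono) simp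
  also have "\<dots> = ennreal (1/2 * (2 * (pi / sqrt 2 + sqrt c)))"
    by (rule ennreal_mult[symmetric]) (use c in auto)
  also have "\<dots> = ennreal (pi / sqrt 2 + sqrt c)"
  proof -
    have "\<And>y::real. 1/2 * (2 * y) = y" by simp
    then show ?thesis by presburger
  qed
  finally show ?thesis by (simp add: c_def)
qed

end
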